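(* Let $G$ be a locally compact group, $H\subset G$ a discrete subset and $U$ a measurable relatively compact neighbourhood of the identity such that $\{xU\}_{x\in H}$ is a partition of $G$ and $hUh^{-1}=U$ for all $h\in H$. Then there is $n\in\mathbb{N}$ such that for every $l\in H$ the approximate block diagonal determined by $l$ meets at most $n$ band diagonals (determined by elements of $H$), and conversely for every $k\in H$ the band diagonal determined by $k$ meets at most $n$ approximate block diagonals (and hence can be covered by these).
   Context: For $k\in H$, the band diagonal determined by $k$ is $\{(x,y)\in G\times G: xy^{-1}\in kU\}$, and the approximate block diagonal determined by $k$ is $\bigcup\{iU\times jU: i,j\in H,\ ij^{-1}\in kU\}$. *)

theory Defs
  imports "HOL-Analysis.Analysis" "HOL-Algebra.Coset"
begin

definition locally_compact_group :: "('a, 'b) monoid_scheme \<Rightarrow> 'a topology \<Rightarrow> bool" where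
  "locally_compact_group G T \<longleftrightarrow>
     group G \<and> topspace T = carrier G \<and>
     continuous_map (prod_topology T T) T (\<lambda>(x, y). x \<otimes>\<^bsub>G\<^esub> y) \<and>
     continuous_map T T (\<lambda>x. inv\<^bsub>G\<^esub> x) \<and>
     Hausdorff_space T \<and> locally_compact_space T"

definition borel_sets_of :: "'a topology \<Rightarrow> 'a set set" where
  "borel_sets_of T = sigma_sets (topspace T) {V. openin T V}"

definition discrete_subset :: "'a topology \<Rightarrow> 'a set \<Rightarrow> bool" where
  "discrete_subset T H \<longleftrightarrow> H \<subseteq> topspace T \<and>
     (\<forall>h\<in>H. \<exists>V. openin T V \<and> V \<inter> H = {h})"

definition relatively_compact :: "'a topology \<Rightarrow> 'a set \<Rightarrow> bool" where
  "relatively_compact T U \<longleftrightarrow> U \<subseteq> topspace T \<and> compactin T (T closure_of U)"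

definition neighbourhood_of :: "'a topology \<Rightarrow> 'a set \<Rightarrow> 'a \<Rightarrow> bool" where
  "neighbourhood_of T U x \<longleftrightarrow> U \<subseteq> topspace T \<and> (\<exists>V. openin T V \<and> x \<in> V \<and> V \<subseteq> U)"

definition band_diagonal :: "('a, 'b) monoid_scheme \<Rightarrow> 'a set \<Rightarrow> 'a \<Rightarrow> ('a \<times> 'a) set" where
  "band_diagonal G U k =
     {(x, y). x \<in> carrier G \<and> y \<in> carrier G \<and> x \<otimes>\<^bsub>G\<^esub> inv\<^bsub>G\<^esub> y \<in> k <#\<^bsub>G\<^esub> U}"

definition approx_block_diagonal ::
  "('a, 'b) monoid_scheme \<Rightarrow> 'a set \<Rightarrow> 'a set \<Rightarrow> 'a \<Rightarrow> ('a \<times> 'a) set" where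
  "approx_block_diagonal G H U k =
     \<Union>{(i <#\<^bsub>G\<^esub> U) \<times> (j <#\<^bsub>G\<^esub> U) | i j. i \<in> H \<and> j \<in> H \<and>
          i \<otimes>\<^bsub>G\<^esub> inv\<^bsub>G\<^esub> j \<in> k <#\<^bsub>G\<^esub> U}"

end

theory Submission
  imports Defs
begin

lemma lcg_mult_cont:
  assumes "locally_compact_group G T"
  shows "continuous_map (prod_topology T T) T (\<lambda>p. fst p \<otimes>\<^bsub>G\<^esub> snd p)"
proof -
  have "(\<lambda>p. fst p \<otimes>\<^bsub>G\<^esub> snd p) = (\<lambda>(x, y). x \<otimes>\<^bsub>G\<^esub> y)" by auto
  then show ?thesis using assms unfolding locally_compact_group_def by simp
qed

lemma compact_mult:
  assumes lcg: "locally_compact_group G T" and A: "compactin T A" and B: "compactin T B"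
  shows "compactin T ((\<lambda>p. fst p \<otimes>\<^bsub>G\<^esub> snd p) ` (A \<times> B))"
proof (rule image_compactin[OF _ lcg_mult_cont[OF lcg]])
  show "compactin (prod_topology T T) (A \<times> B)" using A B by (simp add: compactin_Times)
qed

lemma compact_inv:
  assumes lcg: "locally_compact_group G T" and A: "compactin T A"
  shows "compactin T ((\<lambda>x. inv\<^bsub>G\<^esub> x) ` A)"
  using image_compactin[OF A] lcg unfolding locally_compact_group_def by blast

lemma grp_cancel1:
  fixes G (structure)
  assumes "group G" "a \<in> carrier G" "b \<in> carrier G"
  shows "a \<otimes>\<^bsub>G\<^esub> (inv\<^bsub>G\<^esub> a \<otimes>\<^bsub>G\<^esub> b) = b"
    and "inv\<^bsub>G\<^esub> a \<otimes>\<^bsub>G\<^esub> (a \<otimes>\<^bsub>G\<^esub> b) = b"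
proof -
  interpret group G by fact
  show "a \<otimes> (inv a \<otimes> b) = b" using assms by (simp add: m_assoc[symmetric])
  show "inv a \<otimes> (a \<otimes> b) = b" using assms by (simp add: m_assoc[symmetric])
qed

lemma finite_cover:
  fixes G (structure)
  assumes lcg: "locally_compact_group G T" and S: "compactin T S"
    and V: "openin T V" "\<one>\<^bsub>G\<^esub> \<in> V"
  shows "\<exists>\<O>. finite \<O> \<and> S \<subseteq> \<Union>\<O> \<and>
     (\<forall>W\<in>\<O>. \<forall>x\<in>W. \<forall>y\<in>W. inv\<^bsub>G\<^esub> x \<otimes>\<^bsub>G\<^esub> y \<in> V)"
proof -
  have grp: "group G" and ts: "topspace T = carrier G"
    and mc: "continuous_map (prod_topology T T) T (\<lambda>(x, y). x \<otimes>\<^bsub>G\<^esub> y)"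
    and ic: "continuous_map T T (\<lambda>x. inv\<^bsub>G\<^esub> x)"
    using lcg unfolding locally_compact_group_def by auto
  interpret group G by (rule grp)
  have fc: "continuous_map (prod_topology T T) T (\<lambda>p. inv (fst p) \<otimes> snd p)"
  proof -
    have "continuous_map (prod_topology T T) (prod_topology T T) (\<lambda>p. (inv (fst p), snd p))"
      by (intro continuous_map_pairedI continuous_map_compose[OF continuous_map_fst ic, unfolded o_def]
          continuous_map_snd)
    from continuous_map_compose[OF this lcg_mult_cont[OF lcg]]
    show ?thesis by (simp add: o_def)
  qed
  define \<U> where "\<U> = {W. openin T W \<and> (\<forall>x\<in>W. \<forall>y\<in>W. inv x \<otimes> y \<in> V)}"
  have "S \<subseteq> \<Union>\<U>"
  proof
    fix c assume "c \<in> S"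
    then have c: "c \<in> carrier G" using S ts by (auto simp: compactin_def)
    let ?P = "{p \<in> topspace (prod_topology T T). inv (fst p) \<otimes> snd p \<in> V}"
    have "openin (prod_topology T T) ?P"
      by (rule openin_continuous_map_preimage[OF fc V(1)])
    moreover have "(c, c) \<in> ?P" using c V ts by simp
    ultimately obtain A B where AB: "openin T A" "openin T B" "c \<in> A" "c \<in> B" "A \<times> B \<subseteq> ?P"
      unfolding openin_prod_topology_alt by blast
    have "A \<inter> B \<in> \<U>" using AB unfolding \<U>_def by auto
    then show "c \<in> \<Union>\<U>" using AB by blast
  qed
  then obtain \<F> where "finite \<F>" "\<F> \<subseteq> \<U>" "S \<subseteq> \<Union>\<F>"
    using S unfolding compactin_def \<U>_def by (metis (no_types, lifting) mem_Collect_eq)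
  then show ?thesis unfolding \<U>_def by blast
qed

lemma main_helper:
  fixes G :: "('a, 'b) monoid_scheme" (structure) and T :: "'a topology"
    and H :: "'a set" and U :: "'a set"
  assumes lcg: "locally_compact_group G T"
    and H_discrete: "discrete_subset T H"
    and U_meas: "U \<in> borel_sets_of T"
    and U_relcpt: "relatively_compact T U"
    and U_nbhd: "neighbourhood_of T U \<one>\<^bsub>G\<^esub>"
    and cover: "(\<Union>x\<in>H. x <#\<^bsub>G\<^esub> U) = carrier G"
    and disj: "\<forall>x\<in>H. \<forall>y\<in>H. x \<noteq> y \<longrightarrow> (x <#\<^bsub>G\<^esub> U) \<inter> (y <#\<^bsub>G\<^esub> U) = {}"
    and conj_inv: "\<forall>h\<in>H. (h <#\<^bsub>G\<^esub> U) #>\<^bsub>G\<^esub> inv\<^bsub>G\<^esub> h = U"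
  shows "\<exists>n::nat.
     (\<forall>l\<in>H. finite {k\<in>H. band_diagonal G U k \<inter> approx_block_diagonal G H U l \<noteq> {}} \<and>
             card {k\<in>H. band_diagonal G U k \<inter> approx_block_diagonal G H U l \<noteq> {}} \<le> n) \<and>
     (\<forall>k\<in>H. finite {l\<in>H. approx_block_diagonal G H U l \<inter> band_diagonal G U k \<noteq> {}} \<and>
             card {l\<in>H. approx_block_diagonal G H U l \<inter> band_diagonal G U k \<noteq> {}} \<le> n \<and>
             band_diagonal G U k \<subseteq>
               \<Union>{approx_block_diagonal G H U l | l. l \<in> H \<and>
                    approx_block_diagonal G H U l \<inter> band_diagonal G U k \<noteq> {}})"
proof -
  have grp: "group G" and ts: "topspace T = carrier G"
    using lcg unfolding locally_compact_group_def by auto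
  interpret group G by (rule grp)
  note gs = m_assoc r_inv l_inv l_one r_one inv_mult_group inv_inv grp_cancel1[OF grp] inv_one
  have HC: "H \<subseteq> carrier G" using H_discrete ts unfolding discrete_subset_def by auto
  have UC: "U \<subseteq> carrier G" using U_relcpt ts unfolding relatively_compact_def by auto
  obtain V where V: "openin T V" "\<one> \<in> V" "V \<subseteq> U"
    using U_nbhd unfolding neighbourhood_of_def by auto
  have one_U: "\<one> \<in> U" using V by auto
  have lc: "\<And>x a. x \<in> a <# U \<longleftrightarrow> (\<exists>u\<in>U. x = a \<otimes> u)"
    by (auto simp: l_coset_def)
  define Ub where "Ub = T closure_of U"
  have Ubc: "compactin T Ub" using U_relcpt unfolding relatively_compact_def Ub_def by auto
  have UUb: "U \<subseteq> Ub" unfolding Ub_def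
    using U_relcpt unfolding relatively_compact_def by (simp add: closure_of_subset)
  define mul where "mul A B = (\<lambda>p. fst p \<otimes> snd p) ` (A \<times> B)" for A B
  define ivs where "ivs A = (\<lambda>x. inv x) ` A" for A
  have mul_mem: "\<And>a b A B. a \<in> A \<Longrightarrow> b \<in> B \<Longrightarrow> a \<otimes> b \<in> mul A B"
    unfolding mul_def by (rule image_eqI[where x="(a, b)" for a b]) auto
  have ivs_mem: "\<And>a A. a \<in> A \<Longrightarrow> inv a \<in> ivs A"
    unfolding ivs_def by blast
  have cm: "\<And>A B. compactin T A \<Longrightarrow> compactin T B \<Longrightarrow> compactin T (mul A B)"
    unfolding mul_def by (rule compact_mult[OF lcg])
  have ci: "\<And>A. compactin T A \<Longrightarrow> compactin T (ivs A)"
    unfolding ivs_def by (rule compact_inv[OF lcg])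
  define S where "S = mul (mul Ub (ivs Ub)) (mul Ub (ivs Ub)) \<union> mul (mul Ub Ub) (mul (ivs Ub) (ivs Ub))"
  have Sc: "compactin T S" unfolding S_def
    by (intro compactin_Un cm ci Ubc)
  obtain \<O> where O: "finite \<O>" "S \<subseteq> \<Union>\<O>"
    "\<forall>W\<in>\<O>. \<forall>x\<in>W. \<forall>y\<in>W. inv x \<otimes> y \<in> V"
    using finite_cover[OF lcg Sc V(1,2)] by blast
  have conj1: "\<And>h u. h \<in> H \<Longrightarrow> u \<in> U \<Longrightarrow> h \<otimes> u \<otimes> inv h \<in> U"
  proof -
    fix h u assume h: "h \<in> H" and u: "u \<in> U"
    have "h \<otimes> u \<otimes> inv h \<in> (h <# U) #> inv h"
      using u by (auto simp: l_coset_def r_coset_def)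
    then show "h \<otimes> u \<otimes> inv h \<in> U" using conj_inv h by simp
  qed
  have conj2: "\<And>h u. h \<in> H \<Longrightarrow> u \<in> U \<Longrightarrow> inv h \<otimes> u \<otimes> h \<in> U"
  proof -
    fix h u assume h: "h \<in> H" and u: "u \<in> U"
    then have "u \<in> (h <# U) #> inv h" using conj_inv by simp
    then obtain u' where u': "u' \<in> U" "u = h \<otimes> u' \<otimes> inv h"
      by (auto simp: l_coset_def r_coset_def)
    have hc: "h \<in> carrier G" "u' \<in> carrier G" using u' h HC UC by auto
    have "inv h \<otimes> u \<otimes> h = u'" using u' hc by (simp add: gs)
    then show "inv h \<otimes> u \<otimes> h \<in> U" using u' by simp
  qed
  have count: "finite {h\<in>H. inv g \<otimes> h \<in> S} \<and> card {h\<in>H. inv g \<otimes> h \<in> S} \<le> card \<O>"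
    if g: "g \<in> carrier G" for g
  proof -
    define A where "A = {h\<in>H. inv g \<otimes> h \<in> S}"
    define f where "f h = (SOME W. W \<in> \<O> \<and> inv g \<otimes> h \<in> W)" for h
    have fO: "f h \<in> \<O> \<and> inv g \<otimes> h \<in> f h" if "h \<in> A" for h
    proof -
      have "\<exists>W. W \<in> \<O> \<and> inv g \<otimes> h \<in> W" using that O(2) unfolding A_def by blast
      then show ?thesis unfolding f_def by (rule someI_ex)
    qed
    have inj: "inj_on f A"
    proof (rule inj_onI)
      fix h h' assume h: "h \<in> A" and h': "h' \<in> A" and e: "f h = f h'"
      have hc: "h \<in> carrier G" "h' \<in> carrier G" using h h' HC unfolding A_def by auto
      have "inv (inv g \<otimes> h) \<otimes> (inv g \<otimes> h') \<in> V"
        using O(3) fO[OF h] fO[OF h'] e by metis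
      moreover have "inv (inv g \<otimes> h) \<otimes> (inv g \<otimes> h') = inv h \<otimes> h'"
        using hc g by (simp add: gs)
      ultimately have iu: "inv h \<otimes> h' \<in> U" using V by auto
      have "h' = h \<otimes> (inv h \<otimes> h')" using hc by (simp add: gs)
      then have "h' \<in> h <# U" using iu lc by blast
      moreover have "h' \<in> h' <# U" using one_U hc lc by (metis r_one)
      ultimately show "h = h'" using disj h h' unfolding A_def by blast
    qed
    have im: "f ` A \<subseteq> \<O>" using fO by blast
    show ?thesis
      using inj_on_finite[OF inj im O(1)] card_inj_on_le[OF inj im O(1)]
      unfolding A_def by blast
  qed
  have dir1: "{k\<in>H. band_diagonal G U k \<inter> approx_block_diagonal G H U l \<noteq> {}}
      \<subseteq> {h\<in>H. inv l \<otimes> h \<in> S}" if lH: "l \<in> H" for l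
  proof clarify
    fix k assume kH: "k \<in> H" and ne: "band_diagonal G U k \<inter> approx_block_diagonal G H U l \<noteq> {}"
    then obtain x y where b: "(x, y) \<in> band_diagonal G U k" and a: "(x, y) \<in> approx_block_diagonal G H U l"
      by auto
    from b obtain u4 where xy: "x \<in> carrier G" "y \<in> carrier G" "u4 \<in> U" "x \<otimes> inv y = k \<otimes> u4"
      unfolding band_diagonal_def using lc by auto
    from a obtain i j where ij0: "i \<in> H" "j \<in> H" "x \<in> i <# U" "y \<in> j <# U"
      "i \<otimes> inv j \<in> l <# U"
      unfolding approx_block_diagonal_def by blast
    obtain u1 u2 u3 where ij: "i \<in> H" "j \<in> H" "u1 \<in> U" "u2 \<in> U" "u3 \<in> U"
      "x = i \<otimes> u1" "y = j \<otimes> u2" "i \<otimes> inv j = l \<otimes> u3"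
      using ij0 unfolding lc by blast
    have cs: "i \<in> carrier G" "j \<in> carrier G" "l \<in> carrier G" "k \<in> carrier G"
      "u1 \<in> carrier G" "u2 \<in> carrier G" "u3 \<in> carrier G" "u4 \<in> carrier G"
      using ij xy HC UC lH kH by auto
    have "k = k \<otimes> u4 \<otimes> inv u4" using cs by (simp add: gs)
    also have "\<dots> = i \<otimes> u1 \<otimes> inv (j \<otimes> u2) \<otimes> inv u4" using xy ij by simp
    finally have k_eq: "k = i \<otimes> u1 \<otimes> inv (j \<otimes> u2) \<otimes> inv u4" .
    have "l = l \<otimes> u3 \<otimes> inv u3" using cs by (simp add: gs)
    also have "\<dots> = i \<otimes> inv j \<otimes> inv u3" using ij by simp
    finally have l_eq: "l = i \<otimes> inv j \<otimes> inv u3" .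
    define a' where "a' = inv l \<otimes> (i \<otimes> u1 \<otimes> inv i) \<otimes> l"
    define b' where "b' = inv l \<otimes> (i \<otimes> u2 \<otimes> inv i) \<otimes> l"
    have a'U: "a' \<in> U" unfolding a'_def by (intro conj2 conj1 lH ij)
    have b'U: "b' \<in> U" unfolding b'_def by (intro conj2 conj1 lH ij)
    have "inv l \<otimes> k = (a' \<otimes> inv b') \<otimes> (u3 \<otimes> inv u4)"
      unfolding a'_def b'_def using cs k_eq l_eq by (simp add: gs)
    moreover have "(a' \<otimes> inv b') \<otimes> (u3 \<otimes> inv u4) \<in> S"
      unfolding S_def using a'U b'U ij(5) xy(3) UUb
      by (intro UnI1 mul_mem ivs_mem) auto
    ultimately show "inv l \<otimes> k \<in> S" by simp
  qed
  have dir2: "{l\<in>H. approx_block_diagonal G H U l \<inter> band_diagonal G U k \<noteq> {}}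
      \<subseteq> {h\<in>H. inv k \<otimes> h \<in> S}" if kH: "k \<in> H" for k
  proof clarify
    fix l assume lH: "l \<in> H" and ne: "approx_block_diagonal G H U l \<inter> band_diagonal G U k \<noteq> {}"
    then obtain x y where b: "(x, y) \<in> band_diagonal G U k" and a: "(x, y) \<in> approx_block_diagonal G H U l"
      by auto
    from b obtain u4 where xy: "x \<in> carrier G" "y \<in> carrier G" "u4 \<in> U" "x \<otimes> inv y = k \<otimes> u4"
      unfolding band_diagonal_def using lc by auto
    from a obtain i j where ij0: "i \<in> H" "j \<in> H" "x \<in> i <# U" "y \<in> j <# U"
      "i \<otimes> inv j \<in> l <# U"
      unfolding approx_block_diagonal_def by blast
    obtain u1 u2 u3 where ij: "i \<in> H" "j \<in> H" "u1 \<in> U" "u2 \<in> U" "u3 \<in> U"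
      "x = i \<otimes> u1" "y = j \<otimes> u2" "i \<otimes> inv j = l \<otimes> u3"
      using ij0 unfolding lc by blast
    have cs: "i \<in> carrier G" "j \<in> carrier G" "l \<in> carrier G" "k \<in> carrier G"
      "u1 \<in> carrier G" "u2 \<in> carrier G" "u3 \<in> carrier G" "u4 \<in> carrier G"
      using ij xy HC UC lH kH by auto
    have "k = k \<otimes> u4 \<otimes> inv u4" using cs by (simp add: gs)
    also have "\<dots> = i \<otimes> u1 \<otimes> inv (j \<otimes> u2) \<otimes> inv u4" using xy ij by simp
    finally have k_eq: "k = i \<otimes> u1 \<otimes> inv (j \<otimes> u2) \<otimes> inv u4" .
    have "l = l \<otimes> u3 \<otimes> inv u3" using cs by (simp add: gs)
    also have "\<dots> = i \<otimes> inv j \<otimes> inv u3" using ij by simp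
    finally have l_eq: "l = i \<otimes> inv j \<otimes> inv u3" .
    define c' where "c' = j \<otimes> u2 \<otimes> inv j"
    define d' where "d' = j \<otimes> u1 \<otimes> inv j"
    have c'U: "c' \<in> U" unfolding c'_def by (intro conj1 ij)
    have d'U: "d' \<in> U" unfolding d'_def by (intro conj1 ij)
    have "inv k \<otimes> l = (u4 \<otimes> c') \<otimes> (inv d' \<otimes> inv u3)"
      unfolding c'_def d'_def using cs k_eq l_eq by (simp add: gs)
    moreover have "(u4 \<otimes> c') \<otimes> (inv d' \<otimes> inv u3) \<in> S"
      unfolding S_def using c'U d'U ij(5) xy(3) UUb
      by (intro UnI2 mul_mem ivs_mem) auto
    ultimately show "inv k \<otimes> l \<in> S" by simp
  qed
  have covers: "band_diagonal G U k \<subseteq>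
      \<Union>{approx_block_diagonal G H U l | l. l \<in> H \<and>
          approx_block_diagonal G H U l \<inter> band_diagonal G U k \<noteq> {}}" for k
  proof
    fix p assume p: "p \<in> band_diagonal G U k"
    obtain x y where pxy: "p = (x, y)" by (cases p)
    have xy: "x \<in> carrier G" "y \<in> carrier G" using p pxy unfolding band_diagonal_def by auto
    obtain i where i: "i \<in> H" "x \<in> i <# U" using xy(1) cover by blast
    obtain j where j: "j \<in> H" "y \<in> j <# U" using xy(2) cover by blast
    have "i \<otimes> inv j \<in> carrier G" using i j HC by auto
    then obtain l where l: "l \<in> H" "i \<otimes> inv j \<in> l <# U" using cover by blast
    have "(x, y) \<in> approx_block_diagonal G H U l"
      unfolding approx_block_diagonal_def using i j l by blast
    then show "p \<in> \<Union>{approx_block_diagonal G H U l | l. l \<in> H \<and>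
          approx_block_diagonal G H U l \<inter> band_diagonal G U k \<noteq> {}}"
      using l p pxy by blast
  qed
  show ?thesis
  proof (intro exI[where x="card \<O>"] conjI ballI)
    fix l assume lH: "l \<in> H"
    have c: "finite {h\<in>H. inv l \<otimes> h \<in> S} \<and> card {h\<in>H. inv l \<otimes> h \<in> S} \<le> card \<O>"
      using count lH HC by auto
    show "finite {k\<in>H. band_diagonal G U k \<inter> approx_block_diagonal G H U l \<noteq> {}}"
      using finite_subset[OF dir1[OF lH]] c by blast
    show "card {k\<in>H. band_diagonal G U k \<inter> approx_block_diagonal G H U l \<noteq> {}} \<le> card \<O>"
      using card_mono[OF _ dir1[OF lH]] c by (meson le_trans)
  next
    fix k assume kH: "k \<in> H"
    have c: "finite {h\<in>H. inv k \<otimes> h \<in> S} \<and> card {h\<in>H. inv k \<otimes> h \<in> S} \<le> card \<O>"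
      using count kH HC by auto
    show "finite {l\<in>H. approx_block_diagonal G H U l \<inter> band_diagonal G U k \<noteq> {}}"
      using finite_subset[OF dir2[OF kH]] c by blast
    show "card {l\<in>H. approx_block_diagonal G H U l \<inter> band_diagonal G U k \<noteq> {}} \<le> card \<O>"
      using card_mono[OF _ dir2[OF kH]] c by (meson le_trans)
    show "band_diagonal G U k \<subseteq>
      \<Union>{approx_block_diagonal G H U l | l. l \<in> H \<and>
          approx_block_diagonal G H U l \<inter> band_diagonal G U k \<noteq> {}}" by (rule covers)
  qed
qed

theorem mainTheorem11:
  fixes G :: "('a, 'b) monoid_scheme" and T :: "'a topology"
    and H :: "'a set" and U :: "'a set"
  assumes lcg: "locally_compact_group G T"
    and H_discrete: "discrete_subset T H"
    and U_meas: "U \<in> borel_sets_of T"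
    and U_relcpt: "relatively_compact T U"
    and U_nbhd: "neighbourhood_of T U \<one>\<^bsub>G\<^esub>"
    and cover: "(\<Union>x\<in>H. x <#\<^bsub>G\<^esub> U) = carrier G"
    and disj: "\<forall>x\<in>H. \<forall>y\<in>H. x \<noteq> y \<longrightarrow> (x <#\<^bsub>G\<^esub> U) \<inter> (y <#\<^bsub>G\<^esub> U) = {}"
    and conj_inv: "\<forall>h\<in>H. (h <#\<^bsub>G\<^esub> U) #>\<^bsub>G\<^esub> inv\<^bsub>G\<^esub> h = U"
  shows "\<exists>n::nat.
     (\<forall>l\<in>H. finite {k\<in>H. band_diagonal G U k \<inter> approx_block_diagonal G H U l \<noteq> {}} \<and>
             card {k\<in>H. band_diagonal G U k \<inter> approx_block_diagonal G H U l \<noteq> {}} \<le> n) \<and>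
     (\<forall>k\<in>H. finite {l\<in>H. approx_block_diagonal G H U l \<inter> band_diagonal G U k \<noteq> {}} \<and>
             card {l\<in>H. approx_block_diagonal G H U l \<inter> band_diagonal G U k \<noteq> {}} \<le> n \<and>
             band_diagonal G U k \<subseteq>
               \<Union>{approx_block_diagonal G H U l | l. l \<in> H \<and>
                    approx_block_diagonal G H U l \<inter> band_diagonal G U k \<noteq> {}})"
  using main_helper[OF assms] .

end
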